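(* Let $\bar\alpha=(\alpha_1,\dots,\alpha_n)$ and $\bar z=(z_1,\dots,z_k)$ be sequences of pairwise distinct complex numbers. For every $(\boldsymbol l,\boldsymbol m)\in\mathcal Z_{kn}$, the subspace $\mathfrak P_{kn}[\boldsymbol l,\boldsymbol m]\subset\mathfrak P_{kn}$ is invariant under $\pi^{\langle n\rangle}_{\bar z}(\mathcal B^{\langle n\rangle}_{\bar\alpha})$ and under $\pi^{\langle k\rangle}_{-\bar\alpha}(\mathcal B^{\langle k\rangle}_{\bar z})$.
   Context: $\mathfrak P_{kn}$ is the space of polynomials in pairwise anticommuting variables $\xi_{ai}$ ($a\le k$, $i\le n$); the left derivation $\partial_{ai}$ sends a monomial $\xi_{c_1}\cdots\xi_{c_l}$ to $(-1)^{s-1}$ times the monomial with the $s$-th factor removed if $c_s=(a,i)$, and to $0$ otherwise. $\pi^{\langle n\rangle}_{\bar z}(e^{\langle n\rangle}_{ij}\otimes t^s)=\sum_a z_a^s\xi_{ai}\partial_{aj}$ and $\pi^{\langle k\rangle}_{-\bar\alpha}(e^{\langle k\rangle}_{ab}\otimes t^s)=\sum_i(-\alpha_i)^s\xi_{ai}\partial_{bi}$ define actions of $\mathfrak{gl}_n[t]$ and $\mathfrak{gl}_k[t]$. $\mathcal Z_{kn}$ is the set of $(\boldsymbol l,\boldsymbol m)\in\mathbb Z_{\ge0}^k\times\mathbb Z_{\ge0}^n$ with $l_a\le n$, $m_i\le k$, $\sum_al_a=\sum_im_i$; $\mathfrak P_{kn}[\boldsymbol l,\boldsymbol m]$ is spanned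 by monomials $\prod\xi_{ai}^{d_{ai}}$, $d_{ai}\in\{0,1\}$, with $\sum_ad_{ai}=m_i$ and $\sum_id_{ai}=l_a$. Bethe algebra: for $\mathfrak{gl}_N[t]$ with generators $e_{ij}$ and $g(x)=\sum_{s\ge0}(g\otimes t^s)x^{-s-1}$, and pairwise distinct $\bar\beta\in\mathbb C^N$, write $\operatorname{rdet}\bigl((\tfrac d{dx}-\beta_i)\delta_{ij}-e_{ji}(x)\bigr)_{i,j=1}^N=(d/dx)^N+\sum_iB_i(x)(d/dx)^{N-i}$ (powers of $d/dx$ on the right, $\operatorname{rdet}A=\sum_\sigma(-1)^\sigma a_{1\sigma(1)}\cdots a_{N\sigma(N)}$), $B_i(x)=\sum_{j\ge0}B_{ij}x^{-j}$; $\mathcal B^{\langle N\rangle}_{\bar\beta}$ is the subalgebra of $U(\mathfrak{gl}_N[t])$ generated by the $B_{ij}$, $j\ge1$. *)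

theory Defs
  imports Complex_Main "HOL-Combinatorics.Permutations"
begin

text \<open>A generator (i,j,s) stands for e_ij (x) t^s. Elements of the free associative
  algebra are coefficient functions on words; U(gl_N[t]) is a quotient of it, and
  representations of gl_N[t] factor through it.\<close>

type_synonym gen = "nat \<times> nat \<times> nat"
type_synonym falg = "gen list \<Rightarrow> complex"

definition fa_zero :: falg where "fa_zero = (\<lambda>w. 0)"
definition fa_one :: falg where "fa_one = (\<lambda>w. if w = [] then 1 else 0)"
definition fa_gen :: "gen \<Rightarrow> falg" where "fa_gen g = (\<lambda>w. if w = [g] then 1 else 0)"
definition fa_add :: "falg \<Rightarrow> falg \<Rightarrow> falg" where "fa_add p q = (\<lambda>w. p w + q w)"
definition fa_smul :: "complex \<Rightarrow> falg \<Rightarrow> falg" where "fa_smul c p = (\<lambda>w. c * p w)"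
definition fa_mult :: "falg \<Rightarrow> falg \<Rightarrow> falg" where
  "fa_mult p q = (\<lambda>w. \<Sum>i\<in>{0..length w}. p (take i w) * q (drop i w))"

text \<open>dsym m j = coefficient of x^(-j) (d/dx)^m (powers of d/dx on the right).\<close>

type_synonym dsym = "nat \<Rightarrow> nat \<Rightarrow> falg"

definition sym_one :: dsym where
  "sym_one = (\<lambda>m j. if m = 0 \<and> j = 0 then fa_one else fa_zero)"

text \<open>Product, using  (d/dx)^a g = sum_r (a choose r) g^(r) (d/dx)^(a-r)  and
  (d/dx)^r x^(-j) = (-1)^r pochhammer j r x^(-j-r).\<close>

definition sym_mult :: "dsym \<Rightarrow> dsym \<Rightarrow> dsym" where
  "sym_mult f g = (\<lambda>M J w.
     \<Sum>a\<in>{0..M+J}. \<Sum>r\<in>{0..min a J}.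
       if M + r < a then 0 else
       (\<Sum>j1\<in>{0..J-r}.
          of_nat (a choose r) * (-1)^r * pochhammer (of_nat (J - r - j1)) r
          * fa_mult (f a j1) (g (M + r - a) (J - r - j1)) w))"

text \<open>Matrix entry (i,j):  delta_ij (d/dx - beta_i) - e_ji(x),
  with e_ji(x) = sum_s (e_ji (x) t^s) x^(-s-1).\<close>

definition bethe_entry :: "(nat \<Rightarrow> complex) \<Rightarrow> nat \<Rightarrow> nat \<Rightarrow> dsym" where
  "bethe_entry \<beta> i j = (\<lambda>m J.
     if m = 1 \<and> J = 0 then (if i = j then fa_one else fa_zero)
     else if m = 0 \<and> J = 0 then (if i = j then fa_smul (- \<beta> i) fa_one else fa_zero)
     else if m = 0 \<and> 1 \<le> J then fa_smul (-1) (fa_gen (j, i, J - 1))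
     else fa_zero)"

definition bethe_rdet :: "nat \<Rightarrow> (nat \<Rightarrow> complex) \<Rightarrow> dsym" where
  "bethe_rdet N \<beta> = (\<lambda>m J w.
     \<Sum>\<sigma>\<in>{\<sigma>. \<sigma> permutes {1..N}}.
       of_int (sign \<sigma>) *
       foldr (\<lambda>r acc. sym_mult (bethe_entry \<beta> r (\<sigma> r)) acc) [1..<N+1] sym_one m J w)"

text \<open>rdet = (d/dx)^N + sum_i B_i(x) (d/dx)^(N-i),  B_i(x) = sum_j B_ij x^(-j).\<close>

definition bethe_B :: "nat \<Rightarrow> (nat \<Rightarrow> complex) \<Rightarrow> nat \<Rightarrow> nat \<Rightarrow> falg" where
  "bethe_B N \<beta> i j = bethe_rdet N \<beta> (N - i) j"

inductive_set bethe_alg :: "nat \<Rightarrow> (nat \<Rightarrow> complex) \<Rightarrow> falg set" for N \<beta> where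
  one: "fa_one \<in> bethe_alg N \<beta>"
| gen: "1 \<le> i \<Longrightarrow> i \<le> N \<Longrightarrow> 1 \<le> j \<Longrightarrow> bethe_B N \<beta> i j \<in> bethe_alg N \<beta>"
| add: "p \<in> bethe_alg N \<beta> \<Longrightarrow> q \<in> bethe_alg N \<beta> \<Longrightarrow> fa_add p q \<in> bethe_alg N \<beta>"
| smul: "p \<in> bethe_alg N \<beta> \<Longrightarrow> fa_smul c p \<in> bethe_alg N \<beta>"
| mult: "p \<in> bethe_alg N \<beta> \<Longrightarrow> q \<in> bethe_alg N \<beta> \<Longrightarrow> fa_mult p q \<in> bethe_alg N \<beta>"

text \<open>An element is a coefficient function on sets T of index pairs (a,i); T stands for
  the monomial prod_{(a,i) in T} xi_ai with factors in lexicographic increasing order.\<close>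

type_synonym gvec = "(nat \<times> nat) set \<Rightarrow> complex"

definition var_less :: "nat \<times> nat \<Rightarrow> nat \<times> nat \<Rightarrow> bool" where
  "var_less d c \<longleftrightarrow> fst d < fst c \<or> (fst d = fst c \<and> snd d < snd c)"

definition gsign :: "nat \<times> nat \<Rightarrow> (nat \<times> nat) set \<Rightarrow> complex" where
  "gsign c S = (-1) ^ card {d \<in> S. var_less d c}"

text \<open>Left multiplication by xi_c and left derivation d_c.\<close>

definition gxi :: "nat \<times> nat \<Rightarrow> gvec \<Rightarrow> gvec" where
  "gxi c v = (\<lambda>T. if c \<in> T then gsign c (T - {c}) * v (T - {c}) else 0)"

definition gdd :: "nat \<times> nat \<Rightarrow> gvec \<Rightarrow> gvec" where
  "gdd c v = (\<lambda>T. if c \<notin> T then gsign c T * v (insert c T) else 0)"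

definition Pkn :: "nat \<Rightarrow> nat \<Rightarrow> gvec set" where
  "Pkn k n = {v. \<forall>T. v T \<noteq> 0 \<longrightarrow> T \<subseteq> {1..k} \<times> {1..n}}"

definition Pkn_lm :: "nat \<Rightarrow> nat \<Rightarrow> (nat \<Rightarrow> nat) \<Rightarrow> (nat \<Rightarrow> nat) \<Rightarrow> gvec set" where
  "Pkn_lm k n l m = {v. \<forall>T. v T \<noteq> 0 \<longrightarrow>
      T \<subseteq> {1..k} \<times> {1..n}
      \<and> (\<forall>i\<in>{1..n}. card {a. (a, i) \<in> T} = m i)
      \<and> (\<forall>a\<in>{1..k}. card {i. (a, i) \<in> T} = l a)}"

definition Zkn :: "nat \<Rightarrow> nat \<Rightarrow> ((nat \<Rightarrow> nat) \<times> (nat \<Rightarrow> nat)) set" where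
  "Zkn k n = {(l, m). (\<forall>a\<in>{1..k}. l a \<le> n) \<and> (\<forall>i\<in>{1..n}. m i \<le> k)
                     \<and> (\<Sum>a=1..k. l a) = (\<Sum>i=1..n. m i)}"

fun word_rep :: "(gen \<Rightarrow> gvec \<Rightarrow> gvec) \<Rightarrow> gen list \<Rightarrow> gvec \<Rightarrow> gvec" where
  "word_rep \<rho> [] v = v"
| "word_rep \<rho> (g # w) v = \<rho> g (word_rep \<rho> w v)"

definition fa_rep :: "(gen \<Rightarrow> gvec \<Rightarrow> gvec) \<Rightarrow> falg \<Rightarrow> gvec \<Rightarrow> gvec" where
  "fa_rep \<rho> p v = (\<lambda>T. \<Sum>w\<in>{w. p w \<noteq> 0}. p w * word_rep \<rho> w v T)"

definition pi_n :: "nat \<Rightarrow> (nat \<Rightarrow> complex) \<Rightarrow> gen \<Rightarrow> gvec \<Rightarrow> gvec" where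
  "pi_n k z g v = (case g of (i, j, s) \<Rightarrow>
     (\<lambda>T. \<Sum>a=1..k. z a ^ s * gxi (a, i) (gdd (a, j) v) T))"

definition pi_k :: "nat \<Rightarrow> (nat \<Rightarrow> complex) \<Rightarrow> gen \<Rightarrow> gvec \<Rightarrow> gvec" where
  "pi_k n \<alpha> g v = (case g of (a, b, s) \<Rightarrow>
     (\<lambda>T. \<Sum>i=1..n. (- \<alpha> i) ^ s * gxi (a, i) (gdd (b, i) v) T))"

end

theory Submission
  imports Defs
begin

fun wt :: "gen list \<Rightarrow> nat \<Rightarrow> int" where
  "wt [] = (\<lambda>x. 0)"
| "wt ((i,j,s) # w) = (\<lambda>x. (if x = i then 1 else 0) - (if x = j then 1 else 0) + wt w x)"

lemma wt_append: "wt (u @ v) = (\<lambda>x. wt u x + wt v x)"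
  by (induction u rule: wt.induct) auto

definition inr :: "nat \<Rightarrow> gen list \<Rightarrow> bool" where
  "inr N w \<longleftrightarrow> (\<forall>g\<in>set w. fst g \<in> {1..N} \<and> fst (snd g) \<in> {1..N})"

definition hom :: "nat \<Rightarrow> (nat \<Rightarrow> int) \<Rightarrow> falg \<Rightarrow> bool" where
  "hom N \<mu> p \<longleftrightarrow> (\<forall>w. p w \<noteq> 0 \<longrightarrow> inr N w \<and> wt w = \<mu>)"

definition shom :: "nat \<Rightarrow> (nat \<Rightarrow> int) \<Rightarrow> dsym \<Rightarrow> bool" where
  "shom N \<mu> f \<longleftrightarrow> (\<forall>M J. hom N \<mu> (f M J))"

lemma sum_nz: "sum f A \<noteq> 0 \<Longrightarrow> \<exists>x\<in>A. f x \<noteq> 0"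
  by (meson sum.neutral)

lemma hom_mult:
  assumes "hom N \<mu>1 p" "hom N \<mu>2 q"
  shows "hom N (\<lambda>x. \<mu>1 x + \<mu>2 x) (fa_mult p q)"
  unfolding hom_def
proof (intro allI impI)
  fix w assume "fa_mult p q w \<noteq> 0"
  then obtain i where "p (take i w) * q (drop i w) \<noteq> 0"
    unfolding fa_mult_def using sum_nz by blast
  then have "p (take i w) \<noteq> 0" "q (drop i w) \<noteq> 0" by auto
  with assms have h: "inr N (take i w)" "wt (take i w) = \<mu>1"
      "inr N (drop i w)" "wt (drop i w) = \<mu>2" unfolding hom_def by auto
  have "w = take i w @ drop i w" by simp
  then have "wt w = (\<lambda>x. \<mu>1 x + \<mu>2 x)" using h wt_append by metis
  moreover have "inr N w" using h unfolding inr_def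
    by (metis Un_iff append_take_drop_id set_append)
  ultimately show "inr N w \<and> wt w = (\<lambda>x. \<mu>1 x + \<mu>2 x)" by simp
qed

lemma hom_zero: "hom N \<mu> fa_zero" by (simp add: hom_def fa_zero_def)
lemma hom_one: "hom N (\<lambda>x. 0) fa_one" by (simp add: hom_def fa_one_def inr_def)
lemma hom_smul: "hom N \<mu> p \<Longrightarrow> hom N \<mu> (fa_smul c p)" by (simp add: hom_def fa_smul_def)
lemma hom_add: "hom N \<mu> p \<Longrightarrow> hom N \<mu> q \<Longrightarrow> hom N \<mu> (fa_add p q)"
  unfolding hom_def fa_add_def by (metis add.left_neutral add.right_neutral)

lemma shom_mult:
  assumes "shom N \<mu>1 f" "shom N \<mu>2 g"
  shows "shom N (\<lambda>x. \<mu>1 x + \<mu>2 x) (sym_mult f g)"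
  unfolding shom_def hom_def
proof (intro allI impI)
  fix M J w assume "sym_mult f g M J w \<noteq> 0"
  then obtain a r j1 where "fa_mult (f a j1) (g (M + r - a) (J - r - j1)) w \<noteq> 0"
    unfolding sym_mult_def
    by (smt (verit, del_insts) mult_eq_0_iff sum_nz)
  moreover have "hom N (\<lambda>x. \<mu>1 x + \<mu>2 x) (fa_mult (f a j1) (g (M + r - a) (J - r - j1)))"
    using assms hom_mult unfolding shom_def by blast
  ultimately show "inr N w \<and> wt w = (\<lambda>x. \<mu>1 x + \<mu>2 x)" unfolding hom_def by blast
qed

definition dl :: "nat \<Rightarrow> nat \<Rightarrow> int" where "dl a = (\<lambda>x. if x = a then 1 else 0)"

lemma shom_entry:
  assumes "i \<in> {1..N}" "j \<in> {1..N}"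
  shows "shom N (\<lambda>x. dl j x - dl i x) (bethe_entry \<beta> i j)"
  unfolding shom_def
proof (intro allI)
  fix M J
  have g: "hom N (\<lambda>x. dl j x - dl i x) (fa_gen (j, i, J - 1))"
    using assms by (auto simp: hom_def fa_gen_def inr_def dl_def)
  have o: "i = j \<Longrightarrow> hom N (\<lambda>x. dl j x - dl i x) fa_one"
    using hom_one by simp
  show "hom N (\<lambda>x. dl j x - dl i x) (bethe_entry \<beta> i j M J)"
    unfolding bethe_entry_def using g o hom_zero hom_smul by auto
qed

lemma shom_sym_one: "shom N (\<lambda>x. 0) sym_one"
  unfolding shom_def sym_one_def using hom_one hom_zero by auto

lemma shom_foldr:
  assumes "\<forall>r\<in>set rs. r \<in> {1..N} \<and> \<sigma> r \<in> {1..N}"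
  shows "shom N (\<lambda>x. sum_list (map (\<lambda>r. dl (\<sigma> r) x - dl r x) rs))
     (foldr (\<lambda>r acc. sym_mult (bethe_entry \<beta> r (\<sigma> r)) acc) rs sym_one)"
  using assms
proof (induction rs)
  case Nil
  then show ?case using shom_sym_one by simp
next
  case (Cons r rs)
  then have "shom N (\<lambda>x. (dl (\<sigma> r) x - dl r x) + sum_list (map (\<lambda>r. dl (\<sigma> r) x - dl r x) rs))
     (sym_mult (bethe_entry \<beta> r (\<sigma> r)) (foldr (\<lambda>r acc. sym_mult (bethe_entry \<beta> r (\<sigma> r)) acc) rs sym_one))"
    using shom_mult[OF shom_entry] by simp
  then show ?case by simp
qed

lemma perm_wt_zero:
  assumes "\<sigma> permutes {1..N}"
  shows "(\<lambda>x. sum_list (map (\<lambda>r. dl (\<sigma> r) x - dl r x) [1..<N+1])) = (\<lambda>x. 0)"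
proof
  fix x
  have "sum_list (map (\<lambda>r. dl (\<sigma> r) x - dl r x) [1..<N+1])
      = (\<Sum>r\<in>{1..N}. dl (\<sigma> r) x - dl r x)"
  proof -
    have "set [1..<N+1] = {1..N}" by auto
    then show ?thesis by (metis distinct_upt sum_list_distinct_conv_sum_set)
  qed
  also have "\<dots> = (\<Sum>r\<in>{1..N}. dl (\<sigma> r) x) - (\<Sum>r\<in>{1..N}. dl r x)"
    by (simp add: sum_subtractf)
  also have "(\<Sum>r\<in>{1..N}. dl (\<sigma> r) x) = (\<Sum>r\<in>{1..N}. dl r x)"
    using sum.permute[OF assms, of "\<lambda>r. dl r x"] by (simp add: comp_def)
  finally show "sum_list (map (\<lambda>r. dl (\<sigma> r) x - dl r x) [1..<N+1]) = 0" by simp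
qed

lemma hom_B: "1 \<le> i \<Longrightarrow> i \<le> N \<Longrightarrow> hom N (\<lambda>x. 0) (bethe_B N \<beta> i j)"
  unfolding hom_def bethe_B_def bethe_rdet_def
proof (intro allI impI)
  fix w
  let ?m = "N - i"
  assume "(\<Sum>\<sigma>\<in>{\<sigma>. \<sigma> permutes {1..N}}. of_int (sign \<sigma>) *
       foldr (\<lambda>r acc. sym_mult (bethe_entry \<beta> r (\<sigma> r)) acc) [1..<N+1] sym_one ?m j w) \<noteq> 0"
  then obtain \<sigma> where s: "\<sigma> permutes {1..N}"
    and nz: "foldr (\<lambda>r acc. sym_mult (bethe_entry \<beta> r (\<sigma> r)) acc) [1..<N+1] sym_one ?m j w \<noteq> 0"
    using sum_nz by fastforce
  have "\<forall>r\<in>set [1..<N+1]. r \<in> {1..N} \<and> \<sigma> r \<in> {1..N}"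
    using s by (metis atLeastLessThanSuc_atLeastAtMost Suc_eq_plus1 permutes_in_image set_upt)
  from shom_foldr[OF this, of \<beta>] perm_wt_zero[OF s] nz
  show "inr N w \<and> wt w = (\<lambda>x. 0)" unfolding shom_def hom_def by metis
qed

lemma hom_alg: "p \<in> bethe_alg N \<beta> \<Longrightarrow> hom N (\<lambda>x. 0) p"
proof (induction rule: bethe_alg.induct)
  case one then show ?case by (rule hom_one)
next
  case (gen i j) then show ?case using hom_B by blast
next
  case (add p q) then show ?case using hom_add by blast
next
  case (smul p c) then show ?case using hom_smul by blast
next
  case (mult p q) then show ?case using hom_mult[OF mult.IH] by simp
qed


lemma card_move:
  assumes "finite T" "c \<in> T" "c' \<notin> T - {c}"
  shows "int (card (insert c' (T - {c}) \<inter> R)) = int (card (T \<inter> R)) - (if c \<in> R then 1 else 0) + (if c' \<in> R then 1 else 0)"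
proof (cases "c' = c")
  case True
  then have "insert c' (T - {c}) = T" using assms by auto
  then show ?thesis using True by simp
next
  case False
  then have c': "c' \<notin> T" using assms by auto
  have f: "finite (T \<inter> R)" using assms by simp
  have pos: "c \<in> R \<Longrightarrow> card (T \<inter> R) > 0" using f assms(2) card_gt_0_iff by blast
  show ?thesis
  proof (cases "c' \<in> R")
    case True
    then have "insert c' (T - {c}) \<inter> R = insert c' (T \<inter> R - {c})" by auto
    moreover have "c' \<notin> T \<inter> R - {c}" using c' by auto
    ultimately show ?thesis using True f assms(2) pos
      by (cases "c \<in> R") (simp_all add: card_Diff_singleton_if of_nat_diff)
  next
    case False
    then have "insert c' (T - {c}) \<inter> R = T \<inter> R - {c}" by auto
    then show ?thesis using False f assms(2) pos
      by (cases "c \<in> R") (simp_all add: card_Diff_singleton_if of_nat_diff)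
  qed
qed

lemma card_col: "card {b. (b, x) \<in> S} = card (S \<inter> {d. snd d = x})"
proof -
  have "{b. (b, x) \<in> S} = (\<lambda>b. (b, x)) -` (S \<inter> {d. snd d = x})" by auto
  moreover have "S \<inter> {d. snd d = x} \<subseteq> range (\<lambda>b. (b, x))" by auto
  moreover have "inj (\<lambda>b. (b, x))" by (auto simp: inj_def)
  ultimately show ?thesis using card_vimage_inj by metis
qed

lemma card_row: "card {y. (a, y) \<in> S} = card (S \<inter> {d. fst d = a})"
proof -
  have "{y. (a, y) \<in> S} = (\<lambda>y. (a, y)) -` (S \<inter> {d. fst d = a})" by auto
  moreover have "S \<inter> {d. fst d = a} \<subseteq> range (\<lambda>y. (a, y))" by auto
  moreover have "inj (\<lambda>y. (a, y))" by (auto simp: inj_def)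
  ultimately show ?thesis using card_vimage_inj by metis
qed

lemma move:
  assumes "gxi c (gdd d u) T' \<noteq> 0"
  shows "\<exists>T. u T \<noteq> 0 \<and> d \<in> T \<and> c \<notin> T - {d} \<and> T' = insert c (T - {d})"
proof -
  have 1: "c \<in> T'" and 2: "gdd d u (T' - {c}) \<noteq> 0" using assms by (auto simp: gxi_def split: if_splits)
  then have 3: "d \<notin> T' - {c}" and 4: "u (insert d (T' - {c})) \<noteq> 0"
    by (auto simp: gdd_def split: if_splits)
  let ?T = "insert d (T' - {c})"
  have "?T - {d} = T' - {c}" using 3 by auto
  then show ?thesis using 1 3 4 by (intro exI[of _ ?T]) auto
qed

definition Inv_n :: "nat \<Rightarrow> nat \<Rightarrow> (nat \<Rightarrow> nat) \<Rightarrow> (nat \<Rightarrow> nat) \<Rightarrow> (nat \<Rightarrow> int) \<Rightarrow> (nat \<times> nat) set \<Rightarrow> bool" where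
  "Inv_n k n l m \<mu> T \<longleftrightarrow> T \<subseteq> {1..k} \<times> {1..n}
     \<and> (\<forall>x\<in>{1..n}. int (card (T \<inter> {d. snd d = x})) = int (m x) + \<mu> x)
     \<and> (\<forall>a\<in>{1..k}. card (T \<inter> {d. fst d = a}) = l a)"

definition Inv_k :: "nat \<Rightarrow> nat \<Rightarrow> (nat \<Rightarrow> nat) \<Rightarrow> (nat \<Rightarrow> nat) \<Rightarrow> (nat \<Rightarrow> int) \<Rightarrow> (nat \<times> nat) set \<Rightarrow> bool" where
  "Inv_k k n l m \<mu> T \<longleftrightarrow> T \<subseteq> {1..k} \<times> {1..n}
     \<and> (\<forall>x\<in>{1..n}. card (T \<inter> {d. snd d = x}) = m x)
     \<and> (\<forall>a\<in>{1..k}. int (card (T \<inter> {d. fst d = a})) = int (l a) + \<mu> a)"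

lemma fin_box: fixes k n :: nat assumes "T \<subseteq> {1..k} \<times> {1..n}" shows "finite T"
  using finite_subset[OF assms finite_cartesian_product[OF finite_atLeastAtMost finite_atLeastAtMost]] .

lemma word_n:
  assumes "inr n w" "v \<in> Pkn_lm k n l m" "word_rep (pi_n k z) w v T \<noteq> 0"
  shows "Inv_n k n l m (wt w) T"
  using assms
proof (induction w arbitrary: T)
  case Nil
  then show ?case by (auto simp: Inv_n_def Pkn_lm_def card_col card_row)
next
  case (Cons g w)
  obtain i j s where g: "g = (i, j, s)" by (cases g) auto
  have ij: "i \<in> {1..n}" "j \<in> {1..n}" and iw: "inr n w" using Cons.prems(1) g by (auto simp: inr_def)
  from Cons.prems(3) g have "pi_n k z (i, j, s) (word_rep (pi_n k z) w v) T \<noteq> 0" by simp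
  then have "(\<Sum>a=1..k. z a ^ s * gxi (a, i) (gdd (a, j) (word_rep (pi_n k z) w v)) T) \<noteq> 0"
    by (simp add: pi_n_def)
  then obtain a where a: "a \<in> {1..k}" and "z a ^ s * gxi (a, i) (gdd (a, j) (word_rep (pi_n k z) w v)) T \<noteq> 0"
    by (rule sum_nz[THEN bexE])
  then have "gxi (a, i) (gdd (a, j) (word_rep (pi_n k z) w v)) T \<noteq> 0" by simp
  then obtain T0 where T0: "word_rep (pi_n k z) w v T0 \<noteq> 0" "(a, j) \<in> T0" "(a, i) \<notin> T0 - {(a, j)}"
     "T = insert (a, i) (T0 - {(a, j)})" using move by blast
  have I: "Inv_n k n l m (wt w) T0" using Cons.IH[OF iw Cons.prems(2) T0(1)] .
  then have fin: "finite T0" using fin_box unfolding Inv_n_def by blast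
  show ?case unfolding Inv_n_def g wt.simps
  proof (intro conjI ballI)
    show "T \<subseteq> {1..k} \<times> {1..n}" using I a ij T0(4) unfolding Inv_n_def by auto
  next
    fix x assume x: "x \<in> {1..n}"
    show "int (card (T \<inter> {d. snd d = x})) = int (m x) + ((if x = i then 1 else 0) - (if x = j then 1 else 0) + wt w x)"
      using card_move[OF fin T0(2) T0(3), of "{d. snd d = x}"] I x T0(4) unfolding Inv_n_def by auto
  next
    fix b assume b: "b \<in> {1..k}"
    have "int (card (T \<inter> {d. fst d = b})) = int (card (T0 \<inter> {d. fst d = b}))"
      using card_move[OF fin T0(2) T0(3), of "{d. fst d = b}"] T0(4) by auto
    then show "card (T \<inter> {d. fst d = b}) = l b" using I b unfolding Inv_n_def by auto
  qed
qed

lemma word_k: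
  assumes "inr k w" "v \<in> Pkn_lm k n l m" "word_rep (pi_k n \<alpha>) w v T \<noteq> 0"
  shows "Inv_k k n l m (wt w) T"
  using assms
proof (induction w arbitrary: T)
  case Nil
  then show ?case by (auto simp: Inv_k_def Pkn_lm_def card_col card_row)
next
  case (Cons g w)
  obtain a b s where g: "g = (a, b, s)" by (cases g) auto
  have ab: "a \<in> {1..k}" "b \<in> {1..k}" and iw: "inr k w" using Cons.prems(1) g by (auto simp: inr_def)
  from Cons.prems(3) g have "pi_k n \<alpha> (a, b, s) (word_rep (pi_k n \<alpha>) w v) T \<noteq> 0" by simp
  then have "(\<Sum>i=1..n. (- \<alpha> i) ^ s * gxi (a, i) (gdd (b, i) (word_rep (pi_k n \<alpha>) w v)) T) \<noteq> 0"
    by (simp add: pi_k_def)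
  then obtain i where i: "i \<in> {1..n}" and "(- \<alpha> i) ^ s * gxi (a, i) (gdd (b, i) (word_rep (pi_k n \<alpha>) w v)) T \<noteq> 0"
    by (rule sum_nz[THEN bexE])
  then have "gxi (a, i) (gdd (b, i) (word_rep (pi_k n \<alpha>) w v)) T \<noteq> 0" by simp
  then obtain T0 where T0: "word_rep (pi_k n \<alpha>) w v T0 \<noteq> 0" "(b, i) \<in> T0" "(a, i) \<notin> T0 - {(b, i)}"
     "T = insert (a, i) (T0 - {(b, i)})" using move by blast
  have I: "Inv_k k n l m (wt w) T0" using Cons.IH[OF iw Cons.prems(2) T0(1)] .
  then have fin: "finite T0" using fin_box unfolding Inv_k_def by blast
  show ?case unfolding Inv_k_def g wt.simps
  proof (intro conjI ballI)
    show "T \<subseteq> {1..k} \<times> {1..n}" using I ab i T0(4) unfolding Inv_k_def by auto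
  next
    fix x assume x: "x \<in> {1..k}"
    show "int (card (T \<inter> {d. fst d = x})) = int (l x) + ((if x = a then 1 else 0) - (if x = b then 1 else 0) + wt w x)"
      using card_move[OF fin T0(2) T0(3), of "{d. fst d = x}"] I x T0(4) unfolding Inv_k_def by auto
  next
    fix y assume y: "y \<in> {1..n}"
    have "int (card (T \<inter> {d. snd d = y})) = int (card (T0 \<inter> {d. snd d = y}))"
      using card_move[OF fin T0(2) T0(3), of "{d. snd d = y}"] T0(4) by auto
    then show "card (T \<inter> {d. snd d = y}) = m y" using I y unfolding Inv_k_def by auto
  qed
qed

lemma fa_rep_nz: "fa_rep \<rho> p v T \<noteq> 0 \<Longrightarrow> \<exists>w. p w \<noteq> 0 \<and> word_rep \<rho> w v T \<noteq> 0"
proof -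
  assume "fa_rep \<rho> p v T \<noteq> 0"
  then have "(\<Sum>w\<in>{w. p w \<noteq> 0}. p w * word_rep \<rho> w v T) \<noteq> 0" by (simp add: fa_rep_def)
  then obtain w where "w \<in> {w. p w \<noteq> 0}" "p w * word_rep \<rho> w v T \<noteq> 0" by (rule sum_nz[THEN bexE])
  then show ?thesis by auto
qed

theorem lemma5p5:
  fixes k n :: nat and \<alpha> z :: "nat \<Rightarrow> complex" and l m :: "nat \<Rightarrow> nat"
  assumes "inj_on \<alpha> {1..n}" and "inj_on z {1..k}"
    and "(l, m) \<in> Zkn k n"
  shows "(\<forall>p\<in>bethe_alg n \<alpha>. \<forall>v\<in>Pkn_lm k n l m. fa_rep (pi_n k z) p v \<in> Pkn_lm k n l m)
       \<and> (\<forall>p\<in>bethe_alg k z. \<forall>v\<in>Pkn_lm k n l m. fa_rep (pi_k n \<alpha>) p v \<in> Pkn_lm k n l m)"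
proof (intro conjI ballI)
  fix p v assume p: "p \<in> bethe_alg n \<alpha>" and v: "v \<in> Pkn_lm k n l m"
  show "fa_rep (pi_n k z) p v \<in> Pkn_lm k n l m"
    unfolding Pkn_lm_def
  proof (intro CollectI allI impI)
    fix T assume "fa_rep (pi_n k z) p v T \<noteq> 0"
    then obtain w where w: "p w \<noteq> 0" "word_rep (pi_n k z) w v T \<noteq> 0" using fa_rep_nz by blast
    have "inr n w" "wt w = (\<lambda>x. 0)" using hom_alg[OF p] w(1) unfolding hom_def by auto
    then have "Inv_n k n l m (\<lambda>x. 0) T" using word_n[OF _ v w(2)] by metis
    then show "T \<subseteq> {1..k} \<times> {1..n} \<and> (\<forall>i\<in>{1..n}. card {a. (a, i) \<in> T} = m i) \<and> (\<forall>a\<in>{1..k}. card {i. (a, i) \<in> T} = l a)"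
      unfolding Inv_n_def card_col card_row by simp
  qed
next
  fix p v assume p: "p \<in> bethe_alg k z" and v: "v \<in> Pkn_lm k n l m"
  show "fa_rep (pi_k n \<alpha>) p v \<in> Pkn_lm k n l m"
    unfolding Pkn_lm_def
  proof (intro CollectI allI impI)
    fix T assume "fa_rep (pi_k n \<alpha>) p v T \<noteq> 0"
    then obtain w where w: "p w \<noteq> 0" "word_rep (pi_k n \<alpha>) w v T \<noteq> 0" using fa_rep_nz by blast
    have "inr k w" "wt w = (\<lambda>x. 0)" using hom_alg[OF p] w(1) unfolding hom_def by auto
    then have "Inv_k k n l m (\<lambda>x. 0) T" using word_k[OF _ v w(2)] by metis
    then show "T \<subseteq> {1..k} \<times> {1..n} \<and> (\<forall>i\<in>{1..n}. card {a. (a, i) \<in> T} = m i) \<and> (\<forall>a\<in>{1..k}. card {i. (a, i) \<in> T} = l a)"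
      unfolding Inv_k_def card_col card_row by simp
  qed
qed

end
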